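(* Define the relative prudence function $$p(x,t):=-\frac{x\,u_{xxx}(x,t)}{u_{xx}(x,t)},\qquad (x,t)\in(0,\infty)\times[0,\infty).$$ Then $p(x,t)>0$ for all $(x,t)$. Moreover: (i) If $\gamma<1$ and $\lim_{x\uparrow\infty}u_0'(x)/x^{\gamma-1}=1$, then for each $t_0\ge0$, $$\lim_{x\uparrow\infty}p(x,t_0)=2-\gamma.$$ (ii) Suppose $\gamma<1$, $\gamma\ne0$, and the following hold: for all $\gamma'\in(\gamma,1)$, $\lim_{x\uparrow\infty}u_0'(x)/x^{\gamma'-1}=0$, and for all $\gamma''<\gamma$, $\lim_{x\uparrow\infty}u_0'(x)/x^{\gamma''-1}=\infty$. Then for each $x_0>0$, $$\lim_{t\uparrow\infty}p(x_0,t)=\begin{cases}1+\frac1a, & a>0,\\ \infty, & a=0.\end{cases}$$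
   Context: Let $\mu$ be a nonzero finite positive Borel measure on $(0,\infty)$ such that $\int y e^{yz}\mu(dy)<\infty$ for every $z\in\mathbb{R}$. Let $a:=\inf\{y\ge 0:\mu((0,y])>0\}$ be the left end point of its support. Define $h(z,t):=\int e^{yz-\frac12 y^2 t}\mu(dy)$ for $(z,t)\in\mathbb{R}\times[0,\infty)$. For each $t$, the map $z\mapsto h(z,t)$ is smooth and strictly increasing with range $(0,\infty)$, and $h_t+\frac12 h_{zz}=0$. Let $u:(0,\infty)\times[0,\infty)\to\mathbb{R}$ be smooth, strictly increasing and strictly concave in $x$, solving $u_t=\frac12 u_x^2/u_{xx}$, and related to $h$ by $u_x(h(z,t),t)=e^{-z+t/2}$ for all $(z,t)$. Write $u_0(x):=u(x,0)$. *)

theory Defs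
  imports "HOL-Analysis.Analysis" "HOL-Probability.Probability"
begin

definition ux :: "(real \<Rightarrow> real \<Rightarrow> real) \<Rightarrow> real \<Rightarrow> real \<Rightarrow> real" where
  "ux u x t = deriv (\<lambda>y. u y t) x"

definition uxx :: "(real \<Rightarrow> real \<Rightarrow> real) \<Rightarrow> real \<Rightarrow> real \<Rightarrow> real" where
  "uxx u x t = deriv (\<lambda>y. ux u y t) x"

definition uxxx :: "(real \<Rightarrow> real \<Rightarrow> real) \<Rightarrow> real \<Rightarrow> real \<Rightarrow> real" where
  "uxxx u x t = deriv (\<lambda>y. uxx u y t) x"

definition ut :: "(real \<Rightarrow> real \<Rightarrow> real) \<Rightarrow> real \<Rightarrow> real \<Rightarrow> real" where
  "ut u x t = vector_derivative (\<lambda>s. u x s) (at t within {0..})"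

text \<open>Smoothness (C-infinity) on (0,oo) x [0,oo): a family F i j of all mixed partial
  derivatives (i-th in x, j-th in t) exists, each jointly continuous.\<close>
definition smooth_quadrant :: "(real \<Rightarrow> real \<Rightarrow> real) \<Rightarrow> bool" where
  "smooth_quadrant u \<longleftrightarrow> (\<exists>F :: nat \<Rightarrow> nat \<Rightarrow> real \<Rightarrow> real \<Rightarrow> real. F 0 0 = u \<and>
     (\<forall>i j. \<forall>x>0. \<forall>t\<ge>0.
        ((\<lambda>y. F i j y t) has_real_derivative F (Suc i) j x t) (at x) \<and>
        ((\<lambda>s. F i j x s) has_real_derivative F i (Suc j) x t) (at t within {0..}) \<and>
        continuous (at (x, t) within ({0<..} \<times> {0..})) (\<lambda>(y, s). F i j y s)))"

definition strictly_concave_on :: "real set \<Rightarrow> (real \<Rightarrow> real) \<Rightarrow> bool" where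
  "strictly_concave_on S f \<longleftrightarrow> (\<forall>x\<in>S. \<forall>y\<in>S. x \<noteq> y \<longrightarrow> (\<forall>\<theta>::real. 0 < \<theta> \<and> \<theta> < 1 \<longrightarrow>
      f ((1 - \<theta>) * x + \<theta> * y) > (1 - \<theta>) * f x + \<theta> * f y))"

definition prudence :: "(real \<Rightarrow> real \<Rightarrow> real) \<Rightarrow> real \<Rightarrow> real \<Rightarrow> real" where
  "prudence u x t = - (x * uxxx u x t / uxx u x t)"

end

theory Submission
  imports Defs
begin

lemma mvt_abs_bound:
  fixes f f' :: "real \<Rightarrow> real"
  assumes der: "\<And>s. \<bar>s - z0\<bar> < r \<Longrightarrow> (f has_real_derivative f' s) (at s)"
    and bd: "\<And>s. \<bar>s - z0\<bar> < r \<Longrightarrow> \<bar>f' s\<bar> \<le> B"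
    and d: "\<bar>d\<bar> < r"
  shows "\<bar>f (z0 + d) - f z0\<bar> \<le> B * \<bar>d\<bar>"
proof (cases "d = 0")
  case True then show ?thesis by simp
next
  case False
  show ?thesis
  proof (cases "d > 0")
    case True
    obtain s where s: "z0 < s" "s < z0 + d" "f (z0 + d) - f z0 = (z0 + d - z0) * f' s"
      using MVT2[of z0 "z0+d" f f'] True der d by force
    have "\<bar>f' s\<bar> \<le> B" using bd s d True by auto
    then show ?thesis using s True by (simp add: abs_mult mult.commute)
  next
    case False
    with \<open>d \<noteq> 0\<close> have dn: "d < 0" by simp
    obtain s where s: "z0 + d < s" "s < z0" "f z0 - f (z0 + d) = (z0 - (z0 + d)) * f' s"
      using MVT2[of "z0+d" z0 f f'] dn der d by force
    have "\<bar>f' s\<bar> \<le> B" using bd s d dn by auto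
    then show ?thesis using s dn by (simp add: abs_mult mult.commute abs_minus_commute)
  qed
qed

lemma leibniz:
  fixes M :: "'a measure" and f f' :: "'a \<Rightarrow> real \<Rightarrow> real" and w :: "'a \<Rightarrow> real"
  assumes r: "r > 0"
    and int: "\<And>z. integrable M (\<lambda>y. f y z)"
    and meas': "(\<lambda>y. f' y z0) \<in> borel_measurable M"
    and der: "AE y in M. \<forall>z. (f y has_real_derivative f' y z) (at z)"
    and bound: "AE y in M. \<forall>z. \<bar>z - z0\<bar> < r \<longrightarrow> \<bar>f' y z\<bar> \<le> w y"
    and intw: "integrable M w"
  shows "((\<lambda>z. \<integral>y. f y z \<partial>M) has_real_derivative (\<integral>y. f' y z0 \<partial>M)) (at z0)"
  unfolding DERIV_def tendsto_at_iff_sequentially comp_def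
proof (intro allI impI)
  fix X :: "nat \<Rightarrow> real"
  assume X0: "\<forall>i. X i \<in> UNIV - {0}" and X: "X \<longlonglongrightarrow> 0"
  from X r obtain N where N: "\<And>n. n \<ge> N \<Longrightarrow> \<bar>X n\<bar> < r"
    unfolding LIMSEQ_iff by (metis real_norm_def diff_zero)
  define q where "q n y = (f y (z0 + X n) - f y z0) / X n" for n y
  have eq: "((\<integral>y. f y (z0 + X n) \<partial>M) - (\<integral>y. f y z0 \<partial>M)) / X n = (\<integral>y. q n y \<partial>M)" for n
    unfolding q_def using int by simp
  have "(\<lambda>n. \<integral>y. q (n + N) y \<partial>M) \<longlonglongrightarrow> (\<integral>y. f' y z0 \<partial>M)"
  proof (rule integral_dominated_convergence[where w=w])
    show "(\<lambda>y. f' y z0) \<in> borel_measurable M" by (rule meas')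
    show "\<And>n. (\<lambda>y. q (n + N) y) \<in> borel_measurable M"
      unfolding q_def using int by (intro borel_measurable_divide borel_measurable_diff) auto
    show "integrable M w" by (rule intw)
    show "AE y in M. (\<lambda>n. q (n + N) y) \<longlonglongrightarrow> f' y z0"
      using der
    proof eventually_elim
      case (elim y)
      then have "(\<lambda>h. (f y (z0 + h) - f y z0) / h) \<midarrow>0\<rightarrow> f' y z0"
        using DERIV_def by blast
      then have "(\<lambda>n. q n y) \<longlonglongrightarrow> f' y z0"
        unfolding q_def tendsto_at_iff_sequentially comp_def using X0 X by blast
      then show ?case by (rule LIMSEQ_ignore_initial_segment)
    qed
    show "AE y in M. norm (q (n + N) y) \<le> w y" for n
      using der bound
    proof eventually_elim
      case (elim y)
      have "\<bar>X (n+N)\<bar> < r" using N by simp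
      then have "\<bar>f y (z0 + X (n+N)) - f y z0\<bar> \<le> w y * \<bar>X (n+N)\<bar>"
        using elim by (intro mvt_abs_bound[where f' = "f' y" and r = r]) auto
      moreover have "X (n+N) \<noteq> 0" using X0 by auto
      ultimately show ?case unfolding q_def
        by (simp add: abs_divide divide_le_eq)
    qed
  qed
  then have "(\<lambda>n. \<integral>y. q n y \<partial>M) \<longlonglongrightarrow> (\<integral>y. f' y z0 \<partial>M)"
    by (rule LIMSEQ_offset)
  then show "(\<lambda>n. ((\<integral>y. f y (z0 + X n) \<partial>M) - (\<integral>y. f y z0 \<partial>M)) / X n) \<longlonglongrightarrow> (\<integral>y. f' y z0 \<partial>M)"
    unfolding eq .
qed

locale lap = finite_measure \<mu> for \<mu> :: "real measure" +
  assumes sets_mu: "sets \<mu> = sets borel"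
    and supp: "emeasure \<mu> {..0} = 0"
    and nonzero: "emeasure \<mu> (space \<mu>) \<noteq> 0"
    and integr: "\<And>z. integrable \<mu> (\<lambda>y. y * exp (y * z))"
begin

definition H :: "nat \<Rightarrow> real \<Rightarrow> real \<Rightarrow> real" where
  "H k z t = (\<integral>y. y ^ k * exp (y * z - y\<^sup>2 * t / 2) \<partial>\<mu>)"

lemma space_mu: "space \<mu> = UNIV"
  using sets_eq_imp_space_eq[OF sets_mu] by simp

lemma sets_mu_borel[simp]: "A \<in> sets borel \<Longrightarrow> A \<in> sets \<mu>"
  by (simp add: sets_mu)

lemma meas_mu: "(f :: real \<Rightarrow> real) \<in> borel_measurable \<mu> \<longleftrightarrow> f \<in> borel_measurable borel"
  by (simp add: measurable_cong_sets[OF sets_mu refl])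

lemma AE_pos: "AE y in \<mu>. 0 < y"
proof (rule AE_I'[of "{..0}"])
  show "{..0} \<in> null_sets \<mu>" using supp by (simp add: null_sets_def)
  show "{x \<in> space \<mu>. \<not> 0 < x} \<subseteq> {..0}" by auto
qed

lemma int_pow_Suc: "integrable \<mu> (\<lambda>y. y ^ Suc k * exp (y * z))"
proof (induction k arbitrary: z)
  case 0 then show ?case using integr[of z] by simp
next
  case (Suc k)
  show ?case
  proof (rule Bochner_Integration.integrable_bound[OF Suc.IH[of "z+1"]])
    show "(\<lambda>y. y ^ Suc (Suc k) * exp (y * z)) \<in> borel_measurable \<mu>"
      unfolding meas_mu by measurable
    show "AE y in \<mu>. norm (y ^ Suc (Suc k) * exp (y * z)) \<le> norm (y ^ Suc k * exp (y * (z + 1)))"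
      using AE_pos
    proof eventually_elim
      case (elim y)
      have "y \<le> exp y" using exp_ge_add_one_self[of y] by linarith
      then have "y ^ Suc k * exp (y * z) * y \<le> y ^ Suc k * exp (y * z) * exp y"
        using elim by (intro mult_left_mono) auto
      then show ?case using elim
        by (simp add: abs_mult exp_add distrib_left mult_ac)
    qed
  qed
qed

lemma int_pow: "integrable \<mu> (\<lambda>y. y ^ k * exp (y * z))"
proof (cases k)
  case (Suc m) then show ?thesis using int_pow_Suc by simp
next
  case 0
  have "integrable \<mu> (\<lambda>y. exp \<bar>z\<bar> + y * exp (y * z))"
    using integr[of z] by simp
  then show ?thesis
  proof (rule Bochner_Integration.integrable_bound)
    show "(\<lambda>y. y ^ k * exp (y * z)) \<in> borel_measurable \<mu>"
      unfolding meas_mu by measurable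
    show "AE y in \<mu>. norm (y ^ k * exp (y * z)) \<le> norm (exp \<bar>z\<bar> + y * exp (y * z))"
      using AE_pos
    proof eventually_elim
      case (elim y)
      show ?case
      proof (cases "y \<ge> 1")
        case True
        then have "exp (y*z) \<le> y * exp (y*z)" by simp
        then show ?thesis using 0 elim by (simp add: add_increasing)
      next
        case False
        have "y*z \<le> y*\<bar>z\<bar>" using elim by (intro mult_left_mono) auto
        also have "\<dots> \<le> \<bar>z\<bar>" using elim False by (intro mult_left_le_one_le) auto
        finally have "exp (y*z) \<le> exp \<bar>z\<bar>" by simp
        moreover have "0 \<le> y * exp (y*z)" using elim by simp
        moreover have "norm (exp \<bar>z\<bar> + y * exp (y * z)) = exp \<bar>z\<bar> + y * exp (y * z)"
          using elim by simp
        ultimately have "exp (y*z) \<le> exp \<bar>z\<bar> + y * exp (y*z)" by linarith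
        then show ?thesis using 0 elim by (simp del: exp_le_cancel_iff)
      qed
    qed
  qed
qed

lemma int_H: "t \<ge> 0 \<Longrightarrow> integrable \<mu> (\<lambda>y. y ^ k * exp (y * z - y\<^sup>2 * t / 2))"
proof (rule Bochner_Integration.integrable_bound[OF int_pow[of k z]])
  show "(\<lambda>y. y ^ k * exp (y * z - y\<^sup>2 * t / 2)) \<in> borel_measurable \<mu>"
    unfolding meas_mu by measurable
  assume t: "t \<ge> 0"
  show "AE y in \<mu>. norm (y ^ k * exp (y * z - y\<^sup>2 * t / 2)) \<le> norm (y ^ k * exp (y * z))"
    using AE_pos
  proof eventually_elim
    case (elim y)
    have "exp (y * z - y\<^sup>2 * t / 2) \<le> exp (y * z)" using t by simp
    then show ?case using elim by (simp add: abs_mult mult_left_mono)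
  qed
qed

end

context lap begin

lemma deriv_H: assumes t: "t \<ge> 0"
  shows "((\<lambda>z. H k z t) has_real_derivative H (Suc k) z0 t) (at z0)"
  unfolding H_def
proof (rule leibniz[where r=1 and w="\<lambda>y. y ^ Suc k * exp (y * (z0 + 1))"])
  show "\<And>z. integrable \<mu> (\<lambda>y. y ^ k * exp (y * z - y\<^sup>2 * t / 2))" using int_H t by blast
  show "(\<lambda>y. y ^ Suc k * exp (y * z0 - y\<^sup>2 * t / 2)) \<in> borel_measurable \<mu>"
    unfolding meas_mu by measurable
  show "integrable \<mu> (\<lambda>y. y ^ Suc k * exp (y * (z0 + 1)))" by (rule int_pow)
  show "AE y in \<mu>. \<forall>z. ((\<lambda>z. y ^ k * exp (y * z - y\<^sup>2 * t / 2)) has_real_derivative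
      y ^ Suc k * exp (y * z - y\<^sup>2 * t / 2)) (at z)"
    by (auto intro!: derivative_eq_intros simp: algebra_simps)
  show "AE y in \<mu>. \<forall>z. \<bar>z - z0\<bar> < 1 \<longrightarrow> \<bar>y ^ Suc k * exp (y * z - y\<^sup>2 * t / 2)\<bar> \<le> y ^ Suc k * exp (y * (z0 + 1))"
    using AE_pos
  proof eventually_elim
    case (elim y)
    show ?case
    proof (intro allI impI)
      fix z assume "\<bar>z - z0\<bar> < 1"
      then have "y * z \<le> y * (z0 + 1)" using elim by (intro mult_left_mono) auto
      then have "y * z - y\<^sup>2 * t / 2 \<le> y * (z0 + 1)" using t by (smt (verit) zero_le_power2 mult_nonneg_nonneg divide_nonneg_pos)
      then show "\<bar>y ^ Suc k * exp (y * z - y\<^sup>2 * t / 2)\<bar> \<le> y ^ Suc k * exp (y * (z0 + 1))"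
        using elim by (simp add: abs_mult mult_left_mono)
    qed
  qed
qed simp

lemma H_pos: assumes t: "t \<ge> 0" shows "H k z t > 0"
proof -
  have i: "integrable \<mu> (\<lambda>y. y ^ k * exp (y * z - y\<^sup>2 * t / 2))" using int_H t by blast
  have nn: "AE y in \<mu>. 0 \<le> y ^ k * exp (y * z - y\<^sup>2 * t / 2)"
    using AE_pos by eventually_elim simp
  have ge: "H k z t \<ge> 0" unfolding H_def using nn by (rule integral_nonneg_AE)
  have "H k z t \<noteq> 0"
  proof
    assume "H k z t = 0"
    then have "AE y in \<mu>. y ^ k * exp (y * z - y\<^sup>2 * t / 2) = 0"
      using integral_nonneg_eq_0_iff_AE[OF i nn] unfolding H_def by simp
    with AE_pos have "AE y in \<mu>. False" by eventually_elim simp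
    then show False using nonzero ae_filter_eq_bot_iff eventually_False by metis
  qed
  with ge show ?thesis by simp
qed

lemma H_cont: "t \<ge> 0 \<Longrightarrow> continuous_on UNIV (\<lambda>z. H k z t)"
  using deriv_H by (meson DERIV_isCont continuous_at_imp_continuous_on)

lemma H_mono: assumes "t \<ge> 0" "z1 < z2" shows "H k z1 t < H k z2 t"
  using DERIV_pos_imp_increasing[OF assms(2)] deriv_H[OF assms(1)] H_pos[OF assms(1)] by blast

end

context lap begin

lemma int_lower:
  assumes i: "integrable \<mu> f" and nn: "AE y in \<mu>. 0 \<le> f y" and A: "A \<in> sets borel"
    and c: "c \<ge> 0" and ge: "\<And>y. y \<in> A \<Longrightarrow> c \<le> f y"
  shows "c * measure \<mu> A \<le> (\<integral>y. f y \<partial>\<mu>)"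
proof -
  have "c * measure \<mu> A = (\<integral>y. c * indicator A y \<partial>\<mu>)"
    using A by (simp add: space_mu)
  also have "\<dots> \<le> (\<integral>y. f y \<partial>\<mu>)"
  proof (rule integral_mono_AE')
    show "integrable \<mu> f" by (rule i)
    show "AE y in \<mu>. c * indicator A y \<le> f y" using nn
      by eventually_elim (auto simp: indicator_def ge)
  qed (rule nn)
  finally show ?thesis .
qed

lemma min_endpoint:
  fixes s0 s1 s z t :: real
  assumes "t \<ge> 0" "s0 \<le> s" "s \<le> s1"
  shows "min (s0 * z - s0\<^sup>2 * t / 2) (s1 * z - s1\<^sup>2 * t / 2) \<le> s * z - s\<^sup>2 * t / 2"
proof -
  have e0: "(s * z - s\<^sup>2 * t / 2) - (s0 * z - s0\<^sup>2 * t / 2) = (s - s0) * (z - (s + s0) * t / 2)"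
    by (simp add: field_simps power2_eq_square)
  have e1: "(s * z - s\<^sup>2 * t / 2) - (s1 * z - s1\<^sup>2 * t / 2) = (s - s1) * (z - (s + s1) * t / 2)"
    by (simp add: field_simps power2_eq_square)
  show ?thesis
  proof (cases "z \<ge> (s + s0) * t / 2")
    case True
    then have "0 \<le> (s - s0) * (z - (s + s0) * t / 2)" using assms by simp
    then show ?thesis using e0 by linarith
  next
    case False
    have "(s + s0) * t \<le> (s + s1) * t" using assms by (intro mult_right_mono) auto
    then have "z \<le> (s + s1) * t / 2" using False by simp
    then have "0 \<le> (s - s1) * (z - (s + s1) * t / 2)" using assms
      by (intro mult_nonpos_nonpos) auto
    then show ?thesis using e1 by linarith
  qed
qed

lemma H0_lower:
  assumes t: "t \<ge> 0" and s: "s0 \<le> s1"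
  shows "measure \<mu> {s0..s1} * exp (min (s0 * z - s0\<^sup>2 * t / 2) (s1 * z - s1\<^sup>2 * t / 2)) \<le> H 0 z t"
proof -
  have "exp (min (s0 * z - s0\<^sup>2 * t / 2) (s1 * z - s1\<^sup>2 * t / 2)) * measure \<mu> {s0..s1} \<le> H 0 z t"
    unfolding H_def
  proof (rule int_lower)
    show "integrable \<mu> (\<lambda>y. y ^ 0 * exp (y * z - y\<^sup>2 * t / 2))" using int_H t by blast
    show "AE y in \<mu>. 0 \<le> y ^ 0 * exp (y * z - y\<^sup>2 * t / 2)" by simp
    fix y assume "y \<in> {s0..s1}"
    then show "exp (min (s0 * z - s0\<^sup>2 * t / 2) (s1 * z - s1\<^sup>2 * t / 2)) \<le> y ^ 0 * exp (y * z - y\<^sup>2 * t / 2)"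
      using min_endpoint[OF t, of s0 y s1 z] by (simp add: mult.commute)
  qed auto
  then show ?thesis by (simp add: mult.commute)
qed

definition a0 :: real where "a0 = Inf {y. y \<ge> 0 \<and> emeasure \<mu> {0<..y} > 0}"

lemma S_ne: "{y. y \<ge> 0 \<and> emeasure \<mu> {0<..y} > 0} \<noteq> {}"
proof
  assume e: "{y. y \<ge> 0 \<and> emeasure \<mu> {0<..y} > 0} = {}"
  have "emeasure \<mu> {0<..real n} = 0" for n
    using e by auto
  then have "emeasure \<mu> (\<Union>n. {0<..real n}) = 0"
    by (intro emeasure_UN_eq_0) auto
  moreover have "(\<Union>n. {0<..real n}) = {0<..}"
  proof (rule equalityI)
    show "(\<Union>n. {0<..real n}) \<subseteq> {0<..}" by auto
    show "{0<..} \<subseteq> (\<Union>n. {0<..real n})"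
    proof
      fix x :: real assume x: "x \<in> {0<..}"
      obtain n where "x < real n" using reals_Archimedean2 by blast
      then have "x \<in> {0<..real n}" using x by auto
      then show "x \<in> (\<Union>n. {0<..real n})" by blast
    qed
  qed
  ultimately have e0: "emeasure \<mu> {0<..} = 0" by simp
  have "UNIV = {..0::real} \<union> {0<..}" by auto
  moreover have "emeasure \<mu> ({..0} \<union> {0<..}) \<le> emeasure \<mu> {..0} + emeasure \<mu> {0<..}"
    by (rule emeasure_subadditive) auto
  ultimately have "emeasure \<mu> UNIV \<le> emeasure \<mu> {..0} + emeasure \<mu> {0<..}" by simp
  then show False using nonzero supp space_mu e0 by simp
qed

lemma S_bdd: "bdd_below {y. y \<ge> 0 \<and> emeasure \<mu> {0<..y} > 0}"
  by (rule bdd_belowI[of _ 0]) auto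

lemma a0_nonneg: "a0 \<ge> 0"
  unfolding a0_def using S_ne by (intro cInf_greatest) auto

lemma null_below: "emeasure \<mu> {..<a0} = 0"
proof -
  have n: "emeasure \<mu> {..a0 - 1 / Suc n} = 0" for n
  proof (cases "a0 - 1 / Suc n \<le> 0")
    case True
    then have "emeasure \<mu> {..a0 - 1 / Suc n} \<le> emeasure \<mu> {..0}"
      by (intro emeasure_mono) auto
    then show ?thesis using supp by simp
  next
    case False
    define r where "r = a0 - 1 / Suc n"
    have "r \<notin> {y. y \<ge> 0 \<and> emeasure \<mu> {0<..y} > 0}"
    proof
      assume "r \<in> {y. y \<ge> 0 \<and> emeasure \<mu> {0<..y} > 0}"
      then have "a0 \<le> r" unfolding a0_def using S_bdd by (rule cInf_lower)
      then show False unfolding r_def by simp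
    qed
    moreover have r0: "r \<ge> 0" using False unfolding r_def by linarith
    ultimately have z: "emeasure \<mu> {0<..r} = 0" by auto
    have "{..r} = {..0} \<union> {0<..r}" using r0 by auto
    moreover have "emeasure \<mu> ({..0} \<union> {0<..r}) \<le> emeasure \<mu> {..0} + emeasure \<mu> {0<..r}"
      by (rule emeasure_subadditive) auto
    ultimately have "emeasure \<mu> {..r} \<le> emeasure \<mu> {..0} + emeasure \<mu> {0<..r}" by simp
    then show ?thesis using z supp r_def by simp
  qed
  have "emeasure \<mu> (\<Union>n. {..a0 - 1 / Suc n}) = 0"
    using n by (intro emeasure_UN_eq_0) auto
  moreover have "(\<Union>n. {..a0 - 1 / Suc n}) = {..<a0}"
  proof safe
    fix x n assume "x \<le> a0 - 1 / real (Suc n)"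
    moreover have "1 / real (Suc n) > 0" by simp
    ultimately show "x < a0" by linarith
  next
    fix x assume "x < a0"
    then have "a0 - x > 0" by simp
    then obtain n where "inverse (real (Suc n)) < a0 - x" using reals_Archimedean by blast
    then have "x \<le> a0 - 1 / Suc n" by (simp add: inverse_eq_divide)
    then show "x \<in> (\<Union>n. {..a0 - 1 / Suc n})" by blast
  qed
  ultimately show ?thesis by simp
qed

lemma AE_ge_a0: "AE y in \<mu>. a0 \<le> y"
proof (rule AE_I'[of "{..<a0}"])
  show "{..<a0} \<in> null_sets \<mu>" using null_below by (intro null_setsI) auto
  show "{x \<in> space \<mu>. \<not> a0 \<le> x} \<subseteq> {..<a0}" by auto
qed

lemma pos_interval:
  assumes eta: "\<eta> > 0"
  shows "\<exists>s0 s1. 0 < s0 \<and> a0 \<le> s0 \<and> s0 \<le> s1 \<and> s1 \<le> a0 + \<eta> \<and> measure \<mu> {s0..s1} > 0"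
proof -
  have "\<exists>x\<in>{y. y \<ge> 0 \<and> emeasure \<mu> {0<..y} > 0}. x < a0 + \<eta>"
    using cInf_less_iff[OF S_ne S_bdd, of "a0+\<eta>"] eta unfolding a0_def by simp
  then obtain x where x: "x \<ge> 0" "emeasure \<mu> {0<..x} > 0" "x < a0 + \<eta>"
    by auto
  define A where "A n = {max a0 (1 / Suc n)..x}" for n :: nat
  have "\<exists>n. emeasure \<mu> (A n) \<noteq> 0"
  proof (rule ccontr)
    assume "\<not> ?thesis"
    then have U0: "emeasure \<mu> (\<Union>n. A n) = 0"
      by (intro emeasure_UN_eq_0) (auto simp: A_def)
    have "{0<..x} \<subseteq> {..<a0} \<union> (\<Union>n. A n)"
    proof
      fix y assume y: "y \<in> {0<..x}"
      show "y \<in> {..<a0} \<union> (\<Union>n. A n)"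
      proof (cases "y < a0")
        case False
        obtain n where "inverse (real (Suc n)) < y" using y reals_Archimedean by auto
        then have "y \<in> A n" using False y by (auto simp: A_def field_simps)
        then show ?thesis by auto
      qed auto
    qed
    then have "emeasure \<mu> {0<..x} \<le> emeasure \<mu> ({..<a0} \<union> (\<Union>n. A n))"
      by (intro emeasure_mono) (auto simp: A_def)
    also have "\<dots> \<le> emeasure \<mu> {..<a0} + emeasure \<mu> (\<Union>n. A n)"
      by (intro emeasure_subadditive) (auto simp: A_def)
    finally show False using U0 null_below x by simp
  qed
  then obtain n where n: "emeasure \<mu> (A n) \<noteq> 0" by blast
  then have ne: "max a0 (1 / Suc n) \<le> x" unfolding A_def by (metis atLeastatMost_empty emeasure_empty linorder_not_le)
  have "measure \<mu> (A n) > 0" using n by (simp add: emeasure_eq_measure measure_nonneg order_less_le)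
  moreover have "0 < max a0 (1 / Suc n)" by (simp add: less_max_iff_disj)
  ultimately show ?thesis using ne x unfolding A_def
    by (intro exI[of _ "max a0 (1 / Suc n)"] exI[of _ x] conjI) (simp_all del: of_nat_Suc)
qed

end

lemma smooth_derivs:
  assumes smooth: "smooth_quadrant u" and t: "t \<ge> 0"
  obtains G1 G2 G3 :: "real \<Rightarrow> real" where
    "\<And>x. x > 0 \<Longrightarrow> ux u x t = G1 x"
    "\<And>x. x > 0 \<Longrightarrow> uxx u x t = G2 x"
    "\<And>x. x > 0 \<Longrightarrow> uxxx u x t = G3 x"
    "\<And>x. x > 0 \<Longrightarrow> (G1 has_real_derivative G2 x) (at x)"
    "\<And>x. x > 0 \<Longrightarrow> (G2 has_real_derivative G3 x) (at x)"
proof -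
  obtain F :: "nat \<Rightarrow> nat \<Rightarrow> real \<Rightarrow> real \<Rightarrow> real" where F0: "F 0 0 = u" and
    FD: "\<And>i j x t. x > 0 \<Longrightarrow> t \<ge> 0 \<Longrightarrow> ((\<lambda>y. F i j y t) has_real_derivative F (Suc i) j x t) (at x)"
    using smooth unfolding smooth_quadrant_def by blast
  have d: "\<And>i x. x > 0 \<Longrightarrow> ((\<lambda>y. F i 0 y t) has_real_derivative F (Suc i) 0 x t) (at x)"
    using FD t by blast
  have e1: "ux u x t = F 1 0 x t" if "x > 0" for x
    unfolding ux_def using d[OF that, of 0] F0 by (simp add: DERIV_imp_deriv)
  have e2: "uxx u x t = F 2 0 x t" if "x > 0" for x
  proof -
    have dd: "((\<lambda>y. F 1 0 y t) has_real_derivative F 2 0 x t) (at x)"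
      using d[OF that, of 1] by (simp add: numeral_2_eq_2)
    have "((\<lambda>y. ux u y t) has_real_derivative F 2 0 x t) (at x)"
      by (rule has_field_derivative_transform_within_open[OF dd, of "{0<..}"])
         (use that e1 in \<open>auto\<close>)
    then show ?thesis unfolding uxx_def by (rule DERIV_imp_deriv)
  qed
  have e3: "uxxx u x t = F 3 0 x t" if "x > 0" for x
  proof -
    have dd: "((\<lambda>y. F 2 0 y t) has_real_derivative F 3 0 x t) (at x)"
      using d[OF that, of 2] by (simp add: numeral_3_eq_3 numeral_2_eq_2)
    have "((\<lambda>y. uxx u y t) has_real_derivative F 3 0 x t) (at x)"
      by (rule has_field_derivative_transform_within_open[OF dd, of "{0<..}"])
         (use that e2 in \<open>auto\<close>)
    then show ?thesis unfolding uxxx_def by (rule DERIV_imp_deriv)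
  qed
  have d1: "((\<lambda>y. F 1 0 y t) has_real_derivative F 2 0 x t) (at x)" if "x > 0" for x
    using d[OF that, of 1] by (simp add: numeral_2_eq_2)
  have d2: "((\<lambda>y. F 2 0 y t) has_real_derivative F 3 0 x t) (at x)" if "x > 0" for x
    using d[OF that, of 2] by (simp add: numeral_3_eq_3 numeral_2_eq_2)
  show ?thesis
    by (rule that[of "\<lambda>x. F 1 0 x t" "\<lambda>x. F 2 0 x t" "\<lambda>x. F 3 0 x t", OF e1 e2 e3 d1 d2])
qed

context lap begin

lemma prud_formula:
  assumes smooth: "smooth_quadrant u" and t: "t \<ge> 0"
    and rel: "\<And>z. ux u (H 0 z t) t = exp (- z + t / 2)"
  shows "uxx u (H 0 z t) t = - exp (- z + t / 2) / H 1 z t"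
    and "prudence u (H 0 z t) t = H 0 z t * (H 1 z t + H 2 z t) / (H 1 z t)\<^sup>2"
proof -
  obtain G1 G2 G3 :: "real \<Rightarrow> real" where G:
    "\<And>x. x > 0 \<Longrightarrow> ux u x t = G1 x"
    "\<And>x. x > 0 \<Longrightarrow> uxx u x t = G2 x"
    "\<And>x. x > 0 \<Longrightarrow> uxxx u x t = G3 x"
    "\<And>x. x > 0 \<Longrightarrow> (G1 has_real_derivative G2 x) (at x)"
    "\<And>x. x > 0 \<Longrightarrow> (G2 has_real_derivative G3 x) (at x)"
    using smooth_derivs[OF smooth t] by blast
  have hp: "\<And>z. H 0 z t > 0" using H_pos t by blast
  have h1p: "H 1 z t > 0" using H_pos t by blast
  have dH0: "((\<lambda>z. H 0 z t) has_real_derivative H 1 z t) (at z)" for z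
    using deriv_H[OF t, of 0 z] by simp
  have dH1: "((\<lambda>z. H 1 z t) has_real_derivative H 2 z t) (at z)" for z
    using deriv_H[OF t, of 1 z] by (simp add: numeral_2_eq_2)
  have eq1: "(\<lambda>z. G1 (H 0 z t)) = (\<lambda>z. exp (- z + t / 2))"
    using rel G(1) hp by (auto intro!: ext)
  have A1: "((\<lambda>z. G1 (H 0 z t)) has_real_derivative G2 (H 0 z t) * H 1 z t) (at z)" for z
    by (rule DERIV_chain2[OF G(4)[OF hp] dH0])
  have B1: "((\<lambda>z. exp (- z + t / 2)) has_real_derivative - exp (- z + t / 2)) (at z)" for z
    by (auto intro!: derivative_eq_intros)
  have D1: "G2 (H 0 z t) * H 1 z t = - exp (- z + t / 2)" for z
    using A1[of z] B1[of z] unfolding eq1 by (rule DERIV_unique)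
  have eq2: "(\<lambda>z. G2 (H 0 z t) * H 1 z t) = (\<lambda>z. - exp (- z + t / 2))"
    using D1 by auto
  have A2: "((\<lambda>z. G2 (H 0 z t) * H 1 z t) has_real_derivative
      G3 (H 0 z t) * H 1 z t * H 1 z t + G2 (H 0 z t) * H 2 z t) (at z)"
    by (rule DERIV_cong[OF DERIV_mult[OF DERIV_chain2[OF G(5)[OF hp] dH0] dH1]]) (simp add: algebra_simps)
  have B2: "((\<lambda>z. - exp (- z + t / 2)) has_real_derivative exp (- z + t / 2)) (at z)"
    by (auto intro!: derivative_eq_intros)
  have D2: "G3 (H 0 z t) * H 1 z t * H 1 z t + G2 (H 0 z t) * H 2 z t = exp (- z + t / 2)"
    using A2 B2 unfolding eq2 by (rule DERIV_unique)
  define e where "e = exp (- z + t / 2)"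
  have ep: "e > 0" unfolding e_def by simp
  have g2: "G2 (H 0 z t) = - e / H 1 z t" using D1[of z] h1p unfolding e_def by (simp add: field_simps)
  have g3: "G3 (H 0 z t) = e * (H 1 z t + H 2 z t) / (H 1 z t)^3"
    using D2 g2 h1p unfolding e_def[symmetric] by (simp add: field_simps power3_eq_cube)
  show "uxx u (H 0 z t) t = - exp (- z + t / 2) / H 1 z t"
    using G(2)[OF hp] g2 e_def by simp
  show "prudence u (H 0 z t) t = H 0 z t * (H 1 z t + H 2 z t) / (H 1 z t)\<^sup>2"
  proof -
    have "prudence u (H 0 z t) t = - (H 0 z t * G3 (H 0 z t) / G2 (H 0 z t))"
      unfolding prudence_def using G(2)[OF hp] G(3)[OF hp] by simp
    also have "\<dots> = - (H 0 z t * (e * (H 1 z t + H 2 z t) / (H 1 z t)^3) / (- e / H 1 z t))"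
      unfolding g2 g3 ..
    also have "\<dots> = H 0 z t * (H 1 z t + H 2 z t) / (H 1 z t)\<^sup>2"
      using h1p ep by (simp add: field_simps power2_eq_square power3_eq_cube)
    finally show ?thesis .
  qed
qed

end

lemma lin_at_top: "(c::real) > 0 \<Longrightarrow> filterlim (\<lambda>r. d + c * r) at_top at_top"
  by (rule filterlim_tendsto_add_at_top[OF tendsto_const filterlim_tendsto_pos_mult_at_top[OF tendsto_const _ filterlim_ident]])

lemma exp_neg_to_0: "filterlim f at_top F \<Longrightarrow> ((\<lambda>x. exp (- f x)) \<longlongrightarrow> (0::real)) F"
  using filterlim_compose[OF exp_at_bot filterlim_uminus_at_top[THEN iffD1]] by blast

context lap begin

lemma H0_small: assumes t: "t \<ge> 0" and x: "x > 0" shows "\<exists>z. H 0 z t < x"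
proof -
  have "((\<lambda>r. \<integral>y. y ^ 0 * exp (y * (- r) - y\<^sup>2 * t / 2) \<partial>\<mu>) \<longlongrightarrow> (\<integral>y. 0 \<partial>\<mu>)) at_top"
  proof (rule integral_dominated_convergence_at_top[where w = "\<lambda>y. 1"])
    show "(\<lambda>y. 0::real) \<in> borel_measurable \<mu>" by simp
    show "\<And>r. (\<lambda>y. y ^ 0 * exp (y * (- r) - y\<^sup>2 * t / 2)) \<in> borel_measurable \<mu>"
      unfolding meas_mu by measurable
    show "integrable \<mu> (\<lambda>y. 1::real)" by simp
    show "AE y in \<mu>. ((\<lambda>r. y ^ 0 * exp (y * (- r) - y\<^sup>2 * t / 2)) \<longlongrightarrow> 0) at_top"
      using AE_pos
    proof eventually_elim
      case (elim y)
      have "((\<lambda>r. exp (- (y\<^sup>2 * t / 2 + y * r))) \<longlongrightarrow> 0) at_top"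
        using elim by (intro exp_neg_to_0 lin_at_top)
      moreover have "(\<lambda>r. y ^ 0 * exp (y * (- r) - y\<^sup>2 * t / 2)) = (\<lambda>r. exp (- (y\<^sup>2 * t / 2 + y * r)))"
        by (intro ext) (simp add: algebra_simps)
      ultimately show ?case by simp
    qed
    show "\<forall>\<^sub>F r in at_top. AE y in \<mu>. norm (y ^ 0 * exp (y * (- r) - y\<^sup>2 * t / 2)) \<le> 1"
    proof (rule eventually_mono[OF eventually_ge_at_top[of 0]])
      fix r :: real assume r: "r \<ge> 0"
      show "AE y in \<mu>. norm (y ^ 0 * exp (y * (- r) - y\<^sup>2 * t / 2)) \<le> 1"
        using AE_pos
      proof eventually_elim
        case (elim y)
        have "0 \<le> y * r" using r elim by simp
        moreover have "0 \<le> y\<^sup>2 * t / 2" using t by simp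
        ultimately have "y * (- r) - y\<^sup>2 * t / 2 \<le> 0" by simp
        then show ?case by simp
      qed
    qed
  qed
  then have "((\<lambda>r. H 0 (- r) t) \<longlongrightarrow> 0) at_top" unfolding H_def by simp
  then have "\<forall>\<^sub>F r in at_top. H 0 (- r) t < x" using x by (rule order_tendstoD)
  then obtain N where "\<And>r. r \<ge> N \<Longrightarrow> H 0 (- r) t < x" unfolding eventually_at_top_linorder by blast
  then have "H 0 (- N) t < x" by blast
  then show ?thesis by blast
qed

lemma H0_large: assumes t: "t \<ge> 0" shows "\<exists>z. H 0 z t > x"
proof -
  obtain s0 s1 where s: "0 < s0" "a0 \<le> s0" "s0 \<le> s1" "s1 \<le> a0 + 1" "measure \<mu> {s0..s1} > 0"
    using pos_interval[of 1] by auto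
  define m where "m = measure \<mu> {s0..s1}"
  have m: "m > 0" using s m_def by simp
  define z where "z = max 0 ((\<bar>ln (\<bar>x\<bar> / m + 1)\<bar> + s1\<^sup>2 * t / 2) / s0 + 1)"
  have z0: "z \<ge> 0" unfolding z_def by simp
  have "s0 * z \<ge> \<bar>ln (\<bar>x\<bar> / m + 1)\<bar> + s1\<^sup>2 * t / 2 + s0"
  proof -
    have "s0 * z \<ge> s0 * ((\<bar>ln (\<bar>x\<bar> / m + 1)\<bar> + s1\<^sup>2 * t / 2) / s0 + 1)"
      unfolding z_def using s by (intro mult_left_mono) auto
    also have "s0 * ((\<bar>ln (\<bar>x\<bar> / m + 1)\<bar> + s1\<^sup>2 * t / 2) / s0 + 1) = \<bar>ln (\<bar>x\<bar> / m + 1)\<bar> + s1\<^sup>2 * t / 2 + s0"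
      using s by (simp add: field_simps)
    finally show ?thesis by simp
  qed
  then have L: "s0 * z - s1\<^sup>2 * t / 2 > ln (\<bar>x\<bar> / m + 1)" using s by linarith
  have "s0 * z - s1\<^sup>2 * t / 2 \<le> min (s0 * z - s0\<^sup>2 * t / 2) (s1 * z - s1\<^sup>2 * t / 2)"
  proof -
    have "s0\<^sup>2 \<le> s1\<^sup>2" using s by (intro power_mono) auto
    then have "s0\<^sup>2 * t \<le> s1\<^sup>2 * t" using t by (rule mult_right_mono)
    moreover have "s0 * z \<le> s1 * z" using s z0 by (intro mult_right_mono) auto
    ultimately show ?thesis by simp
  qed
  with L have "ln (\<bar>x\<bar> / m + 1) < min (s0 * z - s0\<^sup>2 * t / 2) (s1 * z - s1\<^sup>2 * t / 2)"
    by linarith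
  then have "exp (ln (\<bar>x\<bar> / m + 1)) < exp (min (s0 * z - s0\<^sup>2 * t / 2) (s1 * z - s1\<^sup>2 * t / 2))"
    by (simp only: exp_less_cancel_iff)
  moreover have "exp (ln (\<bar>x\<bar> / m + 1)) = \<bar>x\<bar> / m + 1"
    using m by (intro exp_ln) (simp add: add_nonneg_pos)
  ultimately have "exp (min (s0 * z - s0\<^sup>2 * t / 2) (s1 * z - s1\<^sup>2 * t / 2)) > \<bar>x\<bar> / m + 1"
    by simp
  then have "m * exp (min (s0 * z - s0\<^sup>2 * t / 2) (s1 * z - s1\<^sup>2 * t / 2)) > m * (\<bar>x\<bar> / m + 1)"
    using m by simp
  moreover have "m * (\<bar>x\<bar> / m + 1) = \<bar>x\<bar> + m" using m by (simp add: field_simps)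
  then have "m * (\<bar>x\<bar> / m + 1) \<ge> x" using m by linarith
  moreover have "m * exp (min (s0 * z - s0\<^sup>2 * t / 2) (s1 * z - s1\<^sup>2 * t / 2)) \<le> H 0 z t"
    unfolding m_def by (rule H0_lower[OF t s(3)])
  ultimately show ?thesis by (intro exI[of _ z]) linarith
qed

lemma H0_surj: assumes t: "t \<ge> 0" and x: "x > 0" shows "\<exists>z. H 0 z t = x"
proof -
  obtain z1 where z1: "H 0 z1 t < x" using H0_small[OF t x] by blast
  obtain z2 where z2: "H 0 z2 t > x" using H0_large[OF t] by blast
  have "z1 < z2"
  proof (rule ccontr)
    assume "\<not> z1 < z2"
    then have "z2 \<le> z1" by simp
    then have "H 0 z2 t \<le> H 0 z1 t"
      using H_mono[OF t] by (cases "z2 = z1") (auto simp: less_le)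
    then show False using z1 z2 by simp
  qed
  have "continuous_on {z1..z2} (\<lambda>z. H 0 z t)"
    using H_cont[OF t] by (rule continuous_on_subset) simp
  then show ?thesis
    using IVT'[of "\<lambda>z. H 0 z t" z1 x z2] z1 z2 \<open>z1 < z2\<close> by auto
qed

definition Zi :: "real \<Rightarrow> real \<Rightarrow> real" where "Zi x t = (SOME z. H 0 z t = x)"

lemma Zi: "t \<ge> 0 \<Longrightarrow> x > 0 \<Longrightarrow> H 0 (Zi x t) t = x"
  unfolding Zi_def using H0_surj by (rule someI_ex)

lemma Zi_at_top: assumes t: "t \<ge> 0" shows "filterlim (\<lambda>x. Zi x t) at_top at_top"
  unfolding filterlim_at_top
proof
  fix M :: real
  show "\<forall>\<^sub>F x in at_top. M \<le> Zi x t"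
    using eventually_ge_at_top[of "max 1 (H 0 M t)"]
  proof eventually_elim
    case (elim x)
    then have x: "x > 0" "x \<ge> H 0 M t" by auto
    show "M \<le> Zi x t"
    proof (rule ccontr)
      assume "\<not> M \<le> Zi x t"
      then have "H 0 (Zi x t) t < H 0 M t" using H_mono[OF t] by simp
      then show False using Zi[OF t x(1)] x by simp
    qed
  qed
qed

end

context lap begin

lemma H0_to_top: "filterlim (\<lambda>z. H 0 z 0) at_top at_top"
proof -
  obtain s0 s1 where s: "0 < s0" "a0 \<le> s0" "s0 \<le> s1" "s1 \<le> a0 + 1" "measure \<mu> {s0..s1} > 0"
    using pos_interval[of 1] by auto
  define m where "m = measure \<mu> {s0..s1}"
  have m: "m > 0" using s m_def by simp
  have "filterlim (\<lambda>z. m * exp (s0 * z)) at_top at_top"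
    by (rule filterlim_tendsto_pos_mult_at_top[OF tendsto_const m
          filterlim_compose[OF exp_at_top filterlim_tendsto_pos_mult_at_top[OF tendsto_const s(1) filterlim_ident]]])
  moreover have "\<forall>\<^sub>F z in at_top. m * exp (s0 * z) \<le> H 0 z 0"
    using eventually_ge_at_top[of 0]
  proof eventually_elim
    case (elim z)
    have "s0 * z \<le> s1 * z" using s elim by (intro mult_right_mono) auto
    then have "min (s0 * z - s0\<^sup>2 * 0 / 2) (s1 * z - s1\<^sup>2 * 0 / 2) = s0 * z" by simp
    then show ?case using H0_lower[of 0 s0 s1 z] s unfolding m_def by simp
  qed
  ultimately show ?thesis by (rule filterlim_at_top_mono)
qed

lemma g_to_1:
  assumes smooth: "smooth_quadrant u"
    and rel: "\<And>z t. t \<ge> 0 \<Longrightarrow> ux u (H 0 z t) t = exp (- z + t / 2)"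
    and gam: "\<gamma> < 1"
    and hyp: "((\<lambda>x. ux u x 0 / x powr (\<gamma> - 1)) \<longlongrightarrow> 1) at_top"
  shows "((\<lambda>z. H 0 z 0 * exp (- ((1 / (1 - \<gamma>)) * z))) \<longlongrightarrow> 1) at_top"
proof -
  define b where "b = 1 / (1 - \<gamma>)"
  have b: "b > 0" "b * (1 - \<gamma>) = 1" using gam unfolding b_def by auto
  define g where "g z = H 0 z 0 * exp (- (b * z))" for z
  have gp: "g z > 0" for z unfolding g_def using H_pos[of 0] by simp
  have c: "((\<lambda>z. ux u (H 0 z 0) 0 / (H 0 z 0) powr (\<gamma> - 1)) \<longlongrightarrow> 1) at_top"
    using filterlim_compose[OF hyp H0_to_top] .
  have eq: "ux u (H 0 z 0) 0 / (H 0 z 0) powr (\<gamma> - 1) = g z powr (1 - \<gamma>)" for z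
  proof -
    have h0: "H 0 z 0 > 0" using H_pos[of 0] by simp
    have "ux u (H 0 z 0) 0 = exp (- z)" using rel[of 0 z] by simp
    moreover have "g z powr (1 - \<gamma>) = H 0 z 0 powr (1 - \<gamma>) * exp (- (b * z) * (1 - \<gamma>))"
      unfolding g_def by (simp add: powr_mult exp_powr_real)
    moreover have "- (b * z) * (1 - \<gamma>) = - z"
    proof -
      have "- (b * z) * (1 - \<gamma>) = - z * (b * (1 - \<gamma>))" by (simp add: algebra_simps)
      then show ?thesis using b(2) by simp
    qed
    moreover have "H 0 z 0 powr (1 - \<gamma>) = inverse (H 0 z 0 powr (\<gamma> - 1))"
      using powr_minus[of "H 0 z 0" "\<gamma> - 1"] by simp
    ultimately show ?thesis by (simp add: divide_inverse mult.commute)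
  qed
  have c2: "((\<lambda>z. g z powr (1 - \<gamma>)) \<longlongrightarrow> 1) at_top" using c unfolding eq .
  have "((\<lambda>z. (g z powr (1 - \<gamma>)) powr b) \<longlongrightarrow> 1 powr b) at_top"
    by (rule tendsto_powr[OF c2 tendsto_const]) simp
  moreover have "(g z powr (1 - \<gamma>)) powr b = g z" for z
    using gp[of z] b by (simp add: powr_powr mult.commute)
  ultimately have "(g \<longlongrightarrow> 1) at_top" by simp
  then show ?thesis unfolding g_def b_def .
qed

lemma g_integral: "H 0 z 0 * exp (- (b * z)) = (\<integral>y. exp (y * z - y\<^sup>2 * 0 / 2) * exp (- (b * z)) \<partial>\<mu>)"
  unfolding H_def by simp

lemma AE_le_b:
  assumes g: "((\<lambda>z. H 0 z 0 * exp (- (b * z))) \<longlongrightarrow> 1) at_top"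
  shows "AE y in \<mu>. y \<le> b"
proof (rule AE_I'[of "{b<..}"])
  show "{x \<in> space \<mu>. \<not> x \<le> b} \<subseteq> {b<..}" by auto
  show "{b<..} \<in> null_sets \<mu>"
  proof (rule ccontr)
    assume nn: "{b<..} \<notin> null_sets \<mu>"
    have "\<exists>n. emeasure \<mu> {b + 1 / Suc n..} \<noteq> 0"
    proof (rule ccontr)
      assume "\<not> ?thesis"
      then have "emeasure \<mu> (\<Union>n. {b + 1 / Suc n..}) = 0"
        by (intro emeasure_UN_eq_0) auto
      moreover have "(\<Union>n. {b + 1 / Suc n..}) = {b<..}"
      proof (rule equalityI)
        show "(\<Union>n. {b + 1 / Suc n..}) \<subseteq> {b<..}"
        proof
          fix x assume "x \<in> (\<Union>n. {b + 1 / Suc n..})"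
          then obtain n where "b + 1 / Suc n \<le> x" by auto
          moreover have "1 / real (Suc n) > 0" by simp
          ultimately have "b < x" by linarith
          then show "x \<in> {b<..}" by simp
        qed
        show "{b<..} \<subseteq> (\<Union>n. {b + 1 / Suc n..})"
        proof
          fix x assume "x \<in> {b<..}"
          then have "x - b > 0" by simp
          then obtain n where "inverse (real (Suc n)) < x - b" using reals_Archimedean by blast
          then have "x \<in> {b + 1 / Suc n..}" by (simp add: inverse_eq_divide)
          then show "x \<in> (\<Union>n. {b + 1 / Suc n..})" by blast
        qed
      qed
      ultimately have "emeasure \<mu> {b<..} = 0" by simp
      then show False using nn by (simp add: null_sets_def)
    qed
    then obtain n where n: "emeasure \<mu> {b + 1 / Suc n..} \<noteq> 0" by blast
    define c where "c = b + 1 / Suc n"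
    define m where "m = measure \<mu> {c..}"
    have m: "m > 0" using n unfolding m_def c_def
      by (simp add: emeasure_eq_measure measure_nonneg order_less_le)
    have cb: "c - b > 0" unfolding c_def by simp
    have "filterlim (\<lambda>z. m * exp (0 + (c - b) * z)) at_top at_top"
      by (rule filterlim_tendsto_pos_mult_at_top[OF tendsto_const m
          filterlim_compose[OF exp_at_top lin_at_top[OF cb]]])
    moreover have "\<forall>\<^sub>F z in at_top. m * exp (0 + (c - b) * z) \<le> H 0 z 0 * exp (- (b * z))"
      using eventually_ge_at_top[of 0]
    proof eventually_elim
      case (elim z)
      have "exp ((c - b) * z) * m \<le> (\<integral>y. exp (y * z - y\<^sup>2 * 0 / 2) * exp (- (b * z)) \<partial>\<mu>)"
        unfolding m_def
      proof (rule int_lower)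
        show "integrable \<mu> (\<lambda>y. exp (y * z - y\<^sup>2 * 0 / 2) * exp (- (b * z)))"
          using int_H[of 0 0 z] by simp
        fix y assume "y \<in> {c..}"
        then have "(c - b) * z \<le> (y - b) * z" using elim by (intro mult_right_mono) auto
        then show "exp ((c - b) * z) \<le> exp (y * z - y\<^sup>2 * 0 / 2) * exp (- (b * z))"
          by (simp add: exp_add[symmetric] algebra_simps)
      qed auto
      then show ?case using g_integral[of z b] by (simp add: mult.commute)
    qed
    ultimately have top: "filterlim (\<lambda>z. H 0 z 0 * exp (- (b * z))) at_top at_top"
      by (rule filterlim_at_top_mono)
    have "\<forall>\<^sub>F z in at_top. H 0 z 0 * exp (- (b * z)) < 2"
      using g by (rule order_tendstoD) simp
    moreover have "\<forall>\<^sub>F z in at_top. H 0 z 0 * exp (- (b * z)) \<ge> 2"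
      using top by (simp add: filterlim_at_top)
    ultimately have "\<forall>\<^sub>F z in at_top. H 0 z 0 * exp (- (b * z)) < 2 \<and> H 0 z 0 * exp (- (b * z)) \<ge> 2"
      by (rule eventually_conj)
    then obtain N where "\<And>z. z \<ge> N \<Longrightarrow> H 0 z 0 * exp (- (b * z)) < 2 \<and> H 0 z 0 * exp (- (b * z)) \<ge> 2"
      unfolding eventually_at_top_linorder by blast
    from this[of N] show False by linarith
  qed
qed

end

context lap begin

lemma Gk_lim:
  assumes b: "b > 0" and le: "AE y in \<mu>. y \<le> b" and t0: "t0 \<ge> 0"
  shows "((\<lambda>z. H k z t0 * exp (- (b * z) + b\<^sup>2 * t0 / 2)) \<longlongrightarrow> b ^ k * measure \<mu> {b}) at_top"
proof -
  define S where "S z = exp (- (b * z) + b\<^sup>2 * t0 / 2)" for z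
  have eq: "H k z t0 * S z = (\<integral>y. y ^ k * exp (y * z - y\<^sup>2 * t0 / 2) * S z \<partial>\<mu>)" for z
    unfolding H_def by simp
  have "((\<lambda>z. \<integral>y. y ^ k * exp (y * z - y\<^sup>2 * t0 / 2) * S z \<partial>\<mu>) \<longlongrightarrow> (\<integral>y. b ^ k * indicator {b} y \<partial>\<mu>)) at_top"
  proof (rule integral_dominated_convergence_at_top[where w = "\<lambda>y. b ^ k * exp (b\<^sup>2 * t0 / 2)"])
    show "(\<lambda>y. b ^ k * indicator {b} y) \<in> borel_measurable \<mu>"
      unfolding meas_mu by measurable
    show "\<And>z. (\<lambda>y. y ^ k * exp (y * z - y\<^sup>2 * t0 / 2) * S z) \<in> borel_measurable \<mu>"
      unfolding meas_mu by measurable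
    show "integrable \<mu> (\<lambda>y. b ^ k * exp (b\<^sup>2 * t0 / 2))" by simp
    show "AE y in \<mu>. ((\<lambda>z. y ^ k * exp (y * z - y\<^sup>2 * t0 / 2) * S z) \<longlongrightarrow> b ^ k * indicator {b} y) at_top"
      using AE_pos le
    proof eventually_elim
      case (elim y)
      show ?case
      proof (cases "y = b")
        case True
        have "y ^ k * exp (y * z - y\<^sup>2 * t0 / 2) * S z = b ^ k" for z
        proof -
          have "exp (y * z - y\<^sup>2 * t0 / 2) * S z = exp (y * z - y\<^sup>2 * t0 / 2 + (- (b * z) + b\<^sup>2 * t0 / 2))"
            unfolding S_def by (simp only: exp_add)
          also have "y * z - y\<^sup>2 * t0 / 2 + (- (b * z) + b\<^sup>2 * t0 / 2) = 0" using True by simp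
          finally show ?thesis using True by simp
        qed
        then have fe: "(\<lambda>z. y ^ k * exp (y * z - y\<^sup>2 * t0 / 2) * S z) = (\<lambda>z. b ^ k)"
          by (intro ext)
        have "b ^ k * indicator {b} y = b ^ k" using True by simp
        then show ?thesis unfolding fe by (simp only: tendsto_const)
      next
        case False
        then have yb: "b - y > 0" using elim by simp
        have "y ^ k * exp (y * z - y\<^sup>2 * t0 / 2) * S z
            = (y ^ k * exp ((b\<^sup>2 - y\<^sup>2) * t0 / 2)) * exp (- (0 + (b - y) * z))" for z
        proof -
          have "exp (y * z - y\<^sup>2 * t0 / 2) * S z = exp (y * z - y\<^sup>2 * t0 / 2 + (- (b * z) + b\<^sup>2 * t0 / 2))"
            unfolding S_def by (simp only: exp_add)
          also have "y * z - y\<^sup>2 * t0 / 2 + (- (b * z) + b\<^sup>2 * t0 / 2) = (b\<^sup>2 - y\<^sup>2) * t0 / 2 + (- (0 + (b - y) * z))"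
            by (simp add: field_simps)
          also have "exp \<dots> = exp ((b\<^sup>2 - y\<^sup>2) * t0 / 2) * exp (- (0 + (b - y) * z))"
            by (simp only: exp_add)
          finally show ?thesis by (simp add: mult.assoc)
        qed
        then have fe: "(\<lambda>z. y ^ k * exp (y * z - y\<^sup>2 * t0 / 2) * S z)
            = (\<lambda>z. (y ^ k * exp ((b\<^sup>2 - y\<^sup>2) * t0 / 2)) * exp (- (0 + (b - y) * z)))"
          by (intro ext)
        have "((\<lambda>z. (y ^ k * exp ((b\<^sup>2 - y\<^sup>2) * t0 / 2)) * exp (- (0 + (b - y) * z))) \<longlongrightarrow>
            (y ^ k * exp ((b\<^sup>2 - y\<^sup>2) * t0 / 2)) * 0) at_top"
          by (rule tendsto_mult[OF tendsto_const exp_neg_to_0[OF lin_at_top[OF yb]]])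
        then have T: "((\<lambda>z. (y ^ k * exp ((b\<^sup>2 - y\<^sup>2) * t0 / 2)) * exp (- (0 + (b - y) * z))) \<longlongrightarrow> 0) at_top"
          by (simp only: mult_zero_right)
        have ind: "indicator {b} y = (0::real)" using False by simp
        show ?thesis unfolding fe ind mult_zero_right by (rule T)
      qed
    qed
    show "\<forall>\<^sub>F z in at_top. AE y in \<mu>. norm (y ^ k * exp (y * z - y\<^sup>2 * t0 / 2) * S z) \<le> b ^ k * exp (b\<^sup>2 * t0 / 2)"
    proof (rule eventually_mono[OF eventually_ge_at_top[of 0]])
      fix z :: real assume z: "z \<ge> 0"
      show "AE y in \<mu>. norm (y ^ k * exp (y * z - y\<^sup>2 * t0 / 2) * S z) \<le> b ^ k * exp (b\<^sup>2 * t0 / 2)"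
        using AE_pos le
      proof eventually_elim
        case (elim y)
        have "exp (y * z - y\<^sup>2 * t0 / 2) * S z = exp ((y - b) * z - y\<^sup>2 * t0 / 2 + b\<^sup>2 * t0 / 2)"
          unfolding S_def by (simp add: exp_add[symmetric] algebra_simps)
        also have "\<dots> \<le> exp (b\<^sup>2 * t0 / 2)"
        proof -
          have "(y - b) * z \<le> 0" using elim z by (intro mult_nonpos_nonneg) auto
          moreover have "0 \<le> y\<^sup>2 * t0 / 2" using t0 by simp
          ultimately show ?thesis by simp
        qed
        finally have e: "exp (y * z - y\<^sup>2 * t0 / 2) * S z \<le> exp (b\<^sup>2 * t0 / 2)" .
        have p: "y ^ k \<le> b ^ k" using elim by (intro power_mono) auto
        have "y ^ k * (exp (y * z - y\<^sup>2 * t0 / 2) * S z) \<le> b ^ k * exp (b\<^sup>2 * t0 / 2)"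
          using e p elim by (intro mult_mono) (auto simp: S_def)
        moreover have "0 \<le> y ^ k * (exp (y * z - y\<^sup>2 * t0 / 2) * S z)" using elim by (simp add: S_def)
        ultimately show ?case by (simp add: mult.assoc)
      qed
    qed
  qed
  moreover have "(\<integral>y. b ^ k * indicator {b} y \<partial>\<mu>) = b ^ k * measure \<mu> {b}"
    by (simp add: space_mu)
  ultimately have "((\<lambda>z. H k z t0 * S z) \<longlongrightarrow> b ^ k * measure \<mu> {b}) at_top"
    unfolding eq by simp
  then show ?thesis unfolding S_def .
qed

end

lemma scale_ratio:
  fixes h0 h1 h2 S :: real
  assumes "S > 0" "h1 \<noteq> 0"
  shows "(h0 * S) * ((h1 * S) + (h2 * S)) / ((h1 * S)\<^sup>2) = h0 * (h1 + h2) / h1\<^sup>2"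
  using assms by (simp add: field_simps power2_eq_square)

context lap begin

lemma part1:
  assumes smooth: "smooth_quadrant u"
    and rel: "\<And>z t. t \<ge> 0 \<Longrightarrow> ux u (H 0 z t) t = exp (- z + t / 2)"
    and gam: "\<gamma> < 1"
    and hyp: "((\<lambda>x. ux u x 0 / x powr (\<gamma> - 1)) \<longlongrightarrow> 1) at_top"
    and t0: "t0 \<ge> 0"
  shows "((\<lambda>x. prudence u x t0) \<longlongrightarrow> 2 - \<gamma>) at_top"
proof -
  define b where "b = 1 / (1 - \<gamma>)"
  have b: "b > 0" using gam unfolding b_def by simp
  have g: "((\<lambda>z. H 0 z 0 * exp (- (b * z))) \<longlongrightarrow> 1) at_top"
    using g_to_1[OF smooth rel gam hyp] unfolding b_def .
  have le: "AE y in \<mu>. y \<le> b" by (rule AE_le_b[OF g])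
  have "((\<lambda>z. H 0 z 0 * exp (- (b * z) + b\<^sup>2 * 0 / 2)) \<longlongrightarrow> b ^ 0 * measure \<mu> {b}) at_top"
    by (rule Gk_lim[OF b le order_refl])
  then have "((\<lambda>z. H 0 z 0 * exp (- (b * z))) \<longlongrightarrow> measure \<mu> {b}) at_top" by simp
  then have m1: "measure \<mu> {b} = 1" using g tendsto_unique trivial_limit_at_top_linorder by blast
  define S where "S z = exp (- (b * z) + b\<^sup>2 * t0 / 2)" for z
  have Sp: "S z > 0" for z unfolding S_def by simp
  have L: "((\<lambda>z. H k z t0 * S z) \<longlongrightarrow> b ^ k) at_top" for k
    using Gk_lim[OF b le t0, of k] m1 unfolding S_def by simp
  have L0: "((\<lambda>z. H 0 z t0 * S z) \<longlongrightarrow> 1) at_top" using L[of 0] by simp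
  have L1: "((\<lambda>z. H 1 z t0 * S z) \<longlongrightarrow> b) at_top" using L[of 1] by simp
  have L2: "((\<lambda>z. H 2 z t0 * S z) \<longlongrightarrow> b\<^sup>2) at_top" using L[of 2] by simp
  define P where "P z = H 0 z t0 * (H 1 z t0 + H 2 z t0) / (H 1 z t0)\<^sup>2" for z
  have "((\<lambda>z. (H 0 z t0 * S z) * ((H 1 z t0 * S z) + (H 2 z t0 * S z)) / ((H 1 z t0 * S z)\<^sup>2))
      \<longlongrightarrow> 1 * (b + b\<^sup>2) / b\<^sup>2) at_top"
    using b by (intro tendsto_divide tendsto_mult tendsto_add tendsto_power L0 L1 L2) auto
  moreover have "(H 0 z t0 * S z) * ((H 1 z t0 * S z) + (H 2 z t0 * S z)) / ((H 1 z t0 * S z)\<^sup>2) = P z" for z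
    unfolding P_def using Sp[of z] H_pos[OF t0, of 1 z] by (intro scale_ratio) auto
  then have fe: "(\<lambda>z. (H 0 z t0 * S z) * ((H 1 z t0 * S z) + (H 2 z t0 * S z)) / ((H 1 z t0 * S z)\<^sup>2)) = P"
    by (intro ext)
  moreover have "1 * (b + b\<^sup>2) / b\<^sup>2 = 2 - \<gamma>"
  proof -
    have "1 * (b + b\<^sup>2) / b\<^sup>2 = 1 + 1 / b" using b by (simp add: field_simps power2_eq_square)
    also have "1 / b = 1 - \<gamma>" unfolding b_def by simp
    finally show ?thesis by simp
  qed
  ultimately have PL: "(P \<longlongrightarrow> 2 - \<gamma>) at_top" by (simp only: fe)
  have PZ: "((\<lambda>x. P (Zi x t0)) \<longlongrightarrow> 2 - \<gamma>) at_top"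
    by (rule filterlim_compose[OF PL Zi_at_top[OF t0]])
  have ev: "\<forall>\<^sub>F x in at_top. P (Zi x t0) = prudence u x t0"
    using eventually_gt_at_top[of 0]
  proof eventually_elim
    case (elim x)
    have "prudence u (H 0 (Zi x t0) t0) t0 = P (Zi x t0)"
      unfolding P_def by (rule prud_formula(2)[OF smooth t0 rel[OF t0]])
    then show ?case using Zi[OF t0 elim] by simp
  qed
  show ?thesis using tendsto_cong[OF ev] PZ by (rule iffD1)
qed

end

context lap begin

lemma lower_k: assumes t: "t \<ge> 0" shows "a0 ^ k * H 0 z t \<le> H k z t"
proof -
  have "a0 ^ k * H 0 z t = (\<integral>y. a0 ^ k * exp (y * z - y\<^sup>2 * t / 2) \<partial>\<mu>)"
    unfolding H_def by simp
  also have "\<dots> \<le> H k z t" unfolding H_def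
  proof (rule integral_mono_AE)
    show "integrable \<mu> (\<lambda>y. a0 ^ k * exp (y * z - y\<^sup>2 * t / 2))"
      using int_H[OF t, of 0 z] by simp
    show "integrable \<mu> (\<lambda>y. y ^ k * exp (y * z - y\<^sup>2 * t / 2))" using int_H[OF t] by blast
    show "AE y in \<mu>. a0 ^ k * exp (y * z - y\<^sup>2 * t / 2) \<le> y ^ k * exp (y * z - y\<^sup>2 * t / 2)"
      using AE_ge_a0
    proof eventually_elim
      case (elim y)
      have "a0 ^ k \<le> y ^ k" using elim a0_nonneg by (intro power_mono) auto
      then show ?case by (intro mult_right_mono) auto
    qed
  qed
  finally show ?thesis .
qed

definition M :: "nat \<Rightarrow> real" where "M k = (\<integral>y. y ^ k \<partial>\<mu>)"

lemma upper_k: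
  assumes t: "t \<ge> 0" and c: "c \<ge> 0" and B: "B \<ge> 0"
    and bd: "\<And>y. y \<ge> c \<Longrightarrow> exp (y * z - y\<^sup>2 * t / 2) \<le> B"
  shows "H k z t \<le> c ^ k * H 0 z t + B * M k"
proof -
  have iM: "integrable \<mu> (\<lambda>y. y ^ k)" using int_pow[of k 0] by simp
  have i0: "integrable \<mu> (\<lambda>y. exp (y * z - y\<^sup>2 * t / 2))" using int_H[OF t, of 0 z] by simp
  have "H k z t \<le> (\<integral>y. c ^ k * exp (y * z - y\<^sup>2 * t / 2) + B * y ^ k \<partial>\<mu>)" unfolding H_def
  proof (rule integral_mono_AE)
    show "integrable \<mu> (\<lambda>y. y ^ k * exp (y * z - y\<^sup>2 * t / 2))" using int_H[OF t] by blast
    show "integrable \<mu> (\<lambda>y. c ^ k * exp (y * z - y\<^sup>2 * t / 2) + B * y ^ k)"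
      using iM i0 by simp
    show "AE y in \<mu>. y ^ k * exp (y * z - y\<^sup>2 * t / 2) \<le> c ^ k * exp (y * z - y\<^sup>2 * t / 2) + B * y ^ k"
      using AE_pos
    proof eventually_elim
      case (elim y)
      show ?case
      proof (cases "y \<ge> c")
        case True
        have "y ^ k * exp (y * z - y\<^sup>2 * t / 2) \<le> y ^ k * B"
          using bd[OF True] elim by (intro mult_left_mono) auto
        moreover have "0 \<le> c ^ k * exp (y * z - y\<^sup>2 * t / 2)" using c by simp
        ultimately show ?thesis by (simp add: mult.commute)
      next
        case False
        have "y ^ k \<le> c ^ k" using False elim by (intro power_mono) auto
        then have "y ^ k * exp (y * z - y\<^sup>2 * t / 2) \<le> c ^ k * exp (y * z - y\<^sup>2 * t / 2)"
          by (intro mult_right_mono) auto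
        moreover have "0 \<le> B * y ^ k" using B elim by simp
        ultimately show ?thesis by linarith
      qed
    qed
  qed
  also have "(\<integral>y. c ^ k * exp (y * z - y\<^sup>2 * t / 2) + B * y ^ k \<partial>\<mu>) = c ^ k * H 0 z t + B * M k"
    unfolding H_def M_def using iM i0 by simp
  finally show ?thesis .
qed

lemma key_bound:
  assumes x0: "x0 > 0" and d: "\<delta> > 0"
  shows "\<exists>T K. \<forall>t \<ge> T. t \<ge> 0 \<and> a0 ^ k * x0 \<le> H k (Zi x0 t) t \<and>
            H k (Zi x0 t) t \<le> (a0 + \<delta>) ^ k * x0 + K * exp (- (0 + (\<delta>\<^sup>2 / 8) * t))"
proof -
  obtain s0 s1 where s: "0 < s0" "a0 \<le> s0" "s0 \<le> s1" "s1 \<le> a0 + \<delta> / 4" "measure \<mu> {s0..s1} > 0"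
    using pos_interval[of "\<delta>/4"] d by auto
  define m where "m = measure \<mu> {s0..s1}"
  have m: "m > 0" using s m_def by simp
  define T where "T = max 1 (8 * \<bar>ln (x0 / m)\<bar> / (s0 * \<delta>) + 1)"
  define E where "E z t s = s * z - s\<^sup>2 * t / 2" for z t s :: real
  have main: "t \<ge> 0 \<and> a0 ^ k * x0 \<le> H k (Zi x0 t) t \<and>
      H k (Zi x0 t) t \<le> (a0 + \<delta>) ^ k * x0 + (x0 / m * M k) * exp (- (0 + (\<delta>\<^sup>2 / 8) * t))"
    if tT: "t \<ge> T" for t
  proof -
    have t1: "t \<ge> 1" using tT unfolding T_def by simp
    then have t: "t \<ge> 0" by simp
    define z where "z = Zi x0 t"
    have hz: "H 0 z t = x0" unfolding z_def by (rule Zi[OF t x0])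
    have low: "m * exp (min (E z t s0) (E z t s1)) \<le> x0"
      using H0_lower[OF t s(3), of z] hz unfolding m_def E_def by simp
    have zb: "z \<le> (a0 + \<delta> / 4) * t"
    proof (rule ccontr)
      assume "\<not> ?thesis"
      then have zg: "z > (a0 + \<delta> / 4) * t" by simp
      have Es: "E z t s \<ge> s0 * t * (\<delta> / 8)" if "s0 \<le> s" "s \<le> a0 + \<delta> / 4" for s
      proof -
        have sp: "s > 0" using that s by simp
        have "E z t s = s * (z - s * t / 2)" unfolding E_def by (simp add: power2_eq_square algebra_simps)
        also have "z - s * t / 2 \<ge> t * (\<delta> / 8)"
        proof -
          have "s * t \<le> (a0 + \<delta> / 4) * t" using that t by (intro mult_right_mono) auto
          moreover have "a0 * t \<ge> 0" using a0_nonneg t by simp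
          ultimately show ?thesis using zg by (simp add: algebra_simps)
        qed
        then have "s * (z - s * t / 2) \<ge> s * (t * (\<delta> / 8))" using sp by (intro mult_left_mono) auto
        also have "s * (t * (\<delta> / 8)) \<ge> s0 * (t * (\<delta> / 8))"
          using that t d by (intro mult_right_mono) auto
        finally show ?thesis by (simp add: mult.assoc)
      qed
      have "min (E z t s0) (E z t s1) \<ge> s0 * t * (\<delta> / 8)"
        using Es[of s0] Es[of s1] s by simp
      then have "m * exp (s0 * t * (\<delta> / 8)) \<le> x0" using low m
        by (meson exp_le_cancel_iff mult_left_mono order_trans less_imp_le)
      then have "exp (s0 * t * (\<delta> / 8)) \<le> x0 / m" using m by (simp add: field_simps)
      then have "s0 * t * (\<delta> / 8) \<le> ln (x0 / m)" using x0 m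
        by (metis exp_le_cancel_iff exp_ln divide_pos_pos)
      moreover have "s0 * t * (\<delta> / 8) > \<bar>ln (x0 / m)\<bar>"
      proof -
        have "t \<ge> 8 * \<bar>ln (x0 / m)\<bar> / (s0 * \<delta>) + 1" using tT unfolding T_def by simp
        then have "s0 * \<delta> * t \<ge> s0 * \<delta> * (8 * \<bar>ln (x0 / m)\<bar> / (s0 * \<delta>) + 1)"
          using s d by (intro mult_left_mono) auto
        also have "s0 * \<delta> * (8 * \<bar>ln (x0 / m)\<bar> / (s0 * \<delta>) + 1) = 8 * \<bar>ln (x0 / m)\<bar> + s0 * \<delta>"
          using s d by (simp add: field_simps)
        finally have "s0 * \<delta> * t \<ge> 8 * \<bar>ln (x0 / m)\<bar> + s0 * \<delta>" .
        moreover have "s0 * \<delta> > 0" using s d by simp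
        ultimately have "s0 * \<delta> * t > 8 * \<bar>ln (x0 / m)\<bar>" by linarith
        then show ?thesis by (simp add: algebra_simps)
      qed
      ultimately show False by linarith
    qed
    obtain ss where ss: "ss = s0 \<or> ss = s1" "min (E z t s0) (E z t s1) = E z t ss"
      by (metis min_def)
    have ss_rng: "a0 \<le> ss" "ss \<le> a0 + \<delta> / 4" using ss s by auto
    have lowss: "exp (E z t ss) \<le> x0 / m" using low ss(2) m by (simp add: field_simps mult.commute)
    have bd: "exp (y * z - y\<^sup>2 * t / 2) \<le> x0 / m * exp (- (0 + (\<delta>\<^sup>2 / 8) * t))"
      if y: "y \<ge> a0 + \<delta>" for y
    proof -
      have dif: "E z t y - E z t ss = (y - ss) * (z - (y + ss) * t / 2)"
        unfolding E_def by (simp add: power2_eq_square field_simps)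
      have w: "z - (y + ss) * t / 2 \<le> - (\<delta> * t / 4)"
      proof -
        have "(2 * a0 + \<delta>) * t \<le> (y + ss) * t" using y ss_rng t by (intro mult_right_mono) auto
        then show ?thesis using zb by (simp add: algebra_simps)
      qed
      have ys: "y - ss \<ge> 3 * \<delta> / 4" using y ss_rng by simp
      have w0: "- (\<delta> * t / 4) \<le> 0" using d t by simp
      have "(y - ss) * (z - (y + ss) * t / 2) \<le> (3 * \<delta> / 4) * (z - (y + ss) * t / 2)"
        using ys w w0 by (intro mult_right_mono_neg) auto
      also have "\<dots> \<le> (3 * \<delta> / 4) * (- (\<delta> * t / 4))"
        using w d by (intro mult_left_mono) auto
      also have "\<dots> \<le> - (0 + (\<delta>\<^sup>2 / 8) * t)"
      proof -
        have e1: "(3 * \<delta> / 4) * (- (\<delta> * t / 4)) = - (3 / 16 * (\<delta> * \<delta> * t))"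
          by (simp add: field_simps)
        have e2: "- (0 + (\<delta>\<^sup>2 / 8) * t) = - (1 / 8 * (\<delta> * \<delta> * t))"
          by (simp add: power2_eq_square field_simps)
        have "\<delta> * \<delta> * t \<ge> 0" using t by simp
        then show ?thesis unfolding e1 e2 by linarith
      qed
      finally have "E z t y \<le> E z t ss + - (0 + (\<delta>\<^sup>2 / 8) * t)" using dif by simp
      then have "exp (E z t y) \<le> exp (E z t ss) * exp (- (0 + (\<delta>\<^sup>2 / 8) * t))"
        by (simp add: exp_add[symmetric] del: exp_le_cancel_iff) (simp only: exp_le_cancel_iff)
      also have "\<dots> \<le> x0 / m * exp (- (0 + (\<delta>\<^sup>2 / 8) * t))"
        using lowss by (intro mult_right_mono) auto
      finally show ?thesis unfolding E_def .
    qed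
    have up: "H k z t \<le> (a0 + \<delta>) ^ k * H 0 z t + (x0 / m * exp (- (0 + (\<delta>\<^sup>2 / 8) * t))) * M k"
      by (rule upper_k[OF t _ _ bd]) (use a0_nonneg d x0 m in auto)
    have lo: "a0 ^ k * H 0 z t \<le> H k z t" by (rule lower_k[OF t])
    show ?thesis using up lo hz t unfolding z_def[symmetric] by (simp add: mult_ac)
  qed
  then show ?thesis by blast
qed

end

lemma ratio_x0:
  fixes x0 h1 h2 :: real
  assumes "x0 > 0" "h1 \<noteq> 0"
  shows "x0 * (h1 + h2) / h1\<^sup>2 = (h1 / x0 + h2 / x0) / (h1 / x0)\<^sup>2"
  using assms by (simp add: field_simps power2_eq_square)

context lap begin

lemma mk_lim:
  assumes x0: "x0 > 0"
  shows "((\<lambda>t. H k (Zi x0 t) t / x0) \<longlongrightarrow> a0 ^ k) at_top"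
  unfolding tendsto_iff
proof (intro allI impI)
  fix e :: real assume e: "e > 0"
  have "((\<lambda>d. (a0 + d) ^ k) \<longlongrightarrow> (a0 + 0) ^ k) (at_right 0)"
    by (intro tendsto_intros)
  then have "\<forall>\<^sub>F d in at_right 0. (a0 + d) ^ k < a0 ^ k + e / 2"
    using e by (intro order_tendstoD(2)) auto
  then obtain b :: real where b: "b > 0" "\<And>d. d > 0 \<Longrightarrow> d < b \<Longrightarrow> (a0 + d) ^ k < a0 ^ k + e / 2"
    unfolding eventually_at_right_field by auto
  define \<delta> where "\<delta> = b / 2"
  have d: "\<delta> > 0" "(a0 + \<delta>) ^ k < a0 ^ k + e / 2" using b unfolding \<delta>_def by auto
  obtain T K where TK: "\<And>t. t \<ge> T \<Longrightarrow> t \<ge> 0 \<and> a0 ^ k * x0 \<le> H k (Zi x0 t) t \<and>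
            H k (Zi x0 t) t \<le> (a0 + \<delta>) ^ k * x0 + K * exp (- (0 + (\<delta>\<^sup>2 / 8) * t))"
    using key_bound[OF x0 d(1), of k] by blast
  have dd: "\<delta>\<^sup>2 / 8 > 0" using d by simp
  have "((\<lambda>t. K * exp (- (0 + (\<delta>\<^sup>2 / 8) * t))) \<longlongrightarrow> K * 0) at_top"
    by (rule tendsto_mult[OF tendsto_const exp_neg_to_0[OF lin_at_top[OF dd]]])
  then have ev1: "\<forall>\<^sub>F t in at_top. K * exp (- (0 + (\<delta>\<^sup>2 / 8) * t)) < x0 * (e / 2)"
    using x0 e by (intro order_tendstoD(2)) auto
  show "\<forall>\<^sub>F t in at_top. dist (H k (Zi x0 t) t / x0) (a0 ^ k) < e"
    using ev1 eventually_ge_at_top[of T]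
  proof eventually_elim
    case (elim t)
    have B: "a0 ^ k * x0 \<le> H k (Zi x0 t) t"
        "H k (Zi x0 t) t \<le> (a0 + \<delta>) ^ k * x0 + K * exp (- (0 + (\<delta>\<^sup>2 / 8) * t))"
      using TK[OF elim(2)] by auto
    have "(a0 + \<delta>) ^ k * x0 < (a0 ^ k + e / 2) * x0"
      using d(2) x0 by (intro mult_strict_right_mono) auto
    then have "H k (Zi x0 t) t < (a0 ^ k + e) * x0"
      using B(2) elim(1) by (simp add: algebra_simps)
    then have up: "H k (Zi x0 t) t / x0 < a0 ^ k + e" using x0 by (simp add: divide_less_eq)
    have lo: "a0 ^ k \<le> H k (Zi x0 t) t / x0" using B(1) x0 by (simp add: le_divide_eq)
    show ?case using up lo by (simp add: dist_real_def abs_if)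
  qed
qed

lemma part2:
  assumes smooth: "smooth_quadrant u"
    and rel: "\<And>z t. t \<ge> 0 \<Longrightarrow> ux u (H 0 z t) t = exp (- z + t / 2)"
    and x0: "x0 > 0"
  shows "(a0 > 0 \<longrightarrow> ((\<lambda>t. prudence u x0 t) \<longlongrightarrow> 1 + 1 / a0) at_top)
       \<and> (a0 = 0 \<longrightarrow> filterlim (\<lambda>t. prudence u x0 t) at_top at_top)"
proof -
  define m1 where "m1 t = H 1 (Zi x0 t) t / x0" for t
  define m2 where "m2 t = H 2 (Zi x0 t) t / x0" for t
  have M1: "(m1 \<longlongrightarrow> a0) at_top" unfolding m1_def using mk_lim[OF x0, of 1] by simp
  have M2: "(m2 \<longlongrightarrow> a0\<^sup>2) at_top" unfolding m2_def using mk_lim[OF x0, of 2] by simp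
  have ev: "\<forall>\<^sub>F t in at_top. (m1 t + m2 t) / (m1 t)\<^sup>2 = prudence u x0 t"
    using eventually_ge_at_top[of 0]
  proof eventually_elim
    case (elim t)
    have hz: "H 0 (Zi x0 t) t = x0" by (rule Zi[OF elim x0])
    have "prudence u (H 0 (Zi x0 t) t) t
        = H 0 (Zi x0 t) t * (H 1 (Zi x0 t) t + H 2 (Zi x0 t) t) / (H 1 (Zi x0 t) t)\<^sup>2"
      by (rule prud_formula(2)[OF smooth elim rel[OF elim]])
    also have "\<dots> = (m1 t + m2 t) / (m1 t)\<^sup>2"
      unfolding hz m1_def m2_def using x0 H_pos[OF elim, of 1 "Zi x0 t"] by (intro ratio_x0) auto
    finally show ?case using hz by simp
  qed
  have m1pos: "\<forall>\<^sub>F t in at_top. m1 t > 0"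
    using eventually_ge_at_top[of 0]
    by eventually_elim (use H_pos x0 in \<open>auto simp: m1_def\<close>)
  have m2nn: "\<forall>\<^sub>F t in at_top. m2 t \<ge> 0"
    using eventually_ge_at_top[of 0]
    by eventually_elim (use H_pos x0 in \<open>auto simp: m2_def less_imp_le\<close>)
  show ?thesis
  proof (intro conjI impI)
    assume a: "a0 > 0"
    have "((\<lambda>t. (m1 t + m2 t) / (m1 t)\<^sup>2) \<longlongrightarrow> (a0 + a0\<^sup>2) / a0\<^sup>2) at_top"
      using a by (intro tendsto_divide tendsto_add tendsto_power M1 M2) auto
    moreover have "(a0 + a0\<^sup>2) / a0\<^sup>2 = 1 + 1 / a0" using a by (simp add: field_simps power2_eq_square)
    ultimately have "((\<lambda>t. (m1 t + m2 t) / (m1 t)\<^sup>2) \<longlongrightarrow> 1 + 1 / a0) at_top" by simp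
    then show "((\<lambda>t. prudence u x0 t) \<longlongrightarrow> 1 + 1 / a0) at_top"
      using tendsto_cong[OF ev] by (rule iffD1[rotated])
  next
    assume a: "a0 = 0"
    have "filterlim (\<lambda>t. inverse (m1 t)) at_top at_top"
      using M1 m1pos unfolding a by (rule filterlim_inverse_at_top)
    moreover have "\<forall>\<^sub>F t in at_top. inverse (m1 t) \<le> prudence u x0 t"
      using ev m1pos m2nn
    proof eventually_elim
      case (elim t)
      have "inverse (m1 t) = m1 t / (m1 t)\<^sup>2" using elim by (simp add: power2_eq_square field_simps)
      also have "\<dots> \<le> (m1 t + m2 t) / (m1 t)\<^sup>2" using elim by (intro divide_right_mono) auto
      finally show ?case using elim by simp
    qed
    ultimately show "filterlim (\<lambda>t. prudence u x0 t) at_top at_top"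
      by (rule filterlim_at_top_mono)
  qed
qed

end

theorem proposition10:
  fixes \<mu> :: "real measure" and u :: "real \<Rightarrow> real \<Rightarrow> real"
    and h :: "real \<Rightarrow> real \<Rightarrow> real" and a :: real
  assumes sets_mu: "sets \<mu> = sets borel"
    and fin: "finite_measure \<mu>"
    and supp: "emeasure \<mu> {..0} = 0"
    and nonzero: "emeasure \<mu> (space \<mu>) \<noteq> 0"
    and integr: "\<And>z. integrable \<mu> (\<lambda>y. y * exp (y * z))"
    and a_def: "a = Inf {y. y \<ge> 0 \<and> emeasure \<mu> {0<..y} > 0}"
    and h_def: "\<And>z t. h z t = (\<integral>y. exp (y * z - y\<^sup>2 * t / 2) \<partial>\<mu>)"
    and smooth: "smooth_quadrant u"
    and incr: "\<And>t. t \<ge> 0 \<Longrightarrow> strict_mono_on {0<..} (\<lambda>x. u x t)"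
    and conc: "\<And>t. t \<ge> 0 \<Longrightarrow> strictly_concave_on {0<..} (\<lambda>x. u x t)"
    and pde: "\<And>x t. x > 0 \<Longrightarrow> t \<ge> 0 \<Longrightarrow> ut u x t = (ux u x t)\<^sup>2 / (2 * uxx u x t)"
    and rel: "\<And>z t. t \<ge> 0 \<Longrightarrow> ux u (h z t) t = exp (- z + t / 2)"
  shows "(\<forall>x>0. \<forall>t\<ge>0. prudence u x t > 0)
    \<and> (\<forall>\<gamma>::real. \<gamma> < 1 \<longrightarrow>
         ((\<lambda>x. ux u x 0 / x powr (\<gamma> - 1)) \<longlongrightarrow> 1) at_top \<longrightarrow>
         (\<forall>t0\<ge>0. ((\<lambda>x. prudence u x t0) \<longlongrightarrow> 2 - \<gamma>) at_top))
    \<and> (\<forall>\<gamma>::real. \<gamma> < 1 \<longrightarrow> \<gamma> \<noteq> 0 \<longrightarrow>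
         (\<forall>\<gamma>'. \<gamma> < \<gamma>' \<and> \<gamma>' < 1 \<longrightarrow> ((\<lambda>x. ux u x 0 / x powr (\<gamma>' - 1)) \<longlongrightarrow> 0) at_top) \<longrightarrow>
         (\<forall>\<gamma>''. \<gamma>'' < \<gamma> \<longrightarrow> filterlim (\<lambda>x. ux u x 0 / x powr (\<gamma>'' - 1)) at_top at_top) \<longrightarrow>
         (\<forall>x0>0. (a > 0 \<longrightarrow> ((\<lambda>t. prudence u x0 t) \<longlongrightarrow> 1 + 1 / a) at_top)
                \<and> (a = 0 \<longrightarrow> filterlim (\<lambda>t. prudence u x0 t) at_top at_top)))"
  proof -
  have L: "lap \<mu>"
    unfolding lap_def lap_axioms_def using fin sets_mu supp nonzero integr by blast
  interpret lap \<mu> by (rule L)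
  have hH: "h z t = H 0 z t" for z t unfolding h_def H_def by simp
  have rel': "\<And>z t. t \<ge> 0 \<Longrightarrow> ux u (H 0 z t) t = exp (- z + t / 2)"
    using rel unfolding hH .
  have aa: "a = a0" unfolding a_def a0_def ..
  have P0: "\<forall>x>0. \<forall>t\<ge>0. prudence u x t > 0"
  proof (intro allI impI)
    fix x t :: real assume x: "x > 0" and t: "t \<ge> 0"
    have hz: "H 0 (Zi x t) t = x" by (rule Zi[OF t x])
    have "prudence u (H 0 (Zi x t) t) t
        = H 0 (Zi x t) t * (H 1 (Zi x t) t + H 2 (Zi x t) t) / (H 1 (Zi x t) t)\<^sup>2"
      by (rule prud_formula(2)[OF smooth t rel'[OF t]])
    moreover have "H 0 (Zi x t) t * (H 1 (Zi x t) t + H 2 (Zi x t) t) / (H 1 (Zi x t) t)\<^sup>2 > 0"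
    proof -
      have p0: "H 0 (Zi x t) t > 0" by (rule H_pos[OF t])
      have p1: "H 1 (Zi x t) t > 0" by (rule H_pos[OF t])
      have p2: "H 2 (Zi x t) t > 0" by (rule H_pos[OF t])
      have "(H 1 (Zi x t) t)\<^sup>2 > 0" using p1 by simp
      then show ?thesis using p0 p1 p2 by (intro divide_pos_pos mult_pos_pos add_pos_pos)
    qed
    ultimately show "prudence u x t > 0" using hz by simp
  qed
  have P1: "\<forall>\<gamma>::real. \<gamma> < 1 \<longrightarrow>
         ((\<lambda>x. ux u x 0 / x powr (\<gamma> - 1)) \<longlongrightarrow> 1) at_top \<longrightarrow>
         (\<forall>t0\<ge>0. ((\<lambda>x. prudence u x t0) \<longlongrightarrow> 2 - \<gamma>) at_top)"
    using part1[OF smooth rel'] by blast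
  have P2: "\<forall>x0>0. (a > 0 \<longrightarrow> ((\<lambda>t. prudence u x0 t) \<longlongrightarrow> 1 + 1 / a) at_top)
                \<and> (a = 0 \<longrightarrow> filterlim (\<lambda>t. prudence u x0 t) at_top at_top)"
    using part2[OF smooth rel'] unfolding aa by blast
  show ?thesis using P0 P1 P2 by blast
qed

end
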